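(* The following hold: (1) If $C$ is a one-sided error PACA with time complexity $T$, then there is a two-sided error PACA $C'$ with time complexity $O(T)$ such that $L(C')=L(C)$. (2) There is a language $L$ that is accepted by some constant-time two-sided error PACA but is not accepted by any one-sided error PACA with time complexity $T(n)=o(\sqrt{n})$.
   Context: A (bounded, one-dimensional) cellular automaton (CA) has a finite state set $Q$, a boundary symbol $\$\notin Q$, and a local transition function $\delta\colon Q_\$\times Q\times Q_\$\to Q$ where $Q_\$=Q\cup\{\$\}$. On a configuration $s=s_0\cdots s_{n-1}\in Q^n$ the global map is $\Delta(s)=\delta(\$,s_0,s_1)\,\delta(s_0,s_1,s_2)\cdots\delta(s_{n-2},s_{n-1},\$)$; cell $i$ is position $i\in\{0,\dots,n-1\}$. A PACA (probabilistic ACA) $C$ has a finite state set $Q$, an input alphabet $\Sigma\subseteq Q$, a set $A\subseteq Q$ of accepting states and two local transition functions $\delta_0,\delta_1$; at every step every cell independently tosses a fair coin $c\in\{0,1\}$ and updates its state by $\delta_c$ (applied to its left neighbor, itself, its right neighbor, with $\$$ beyond the borders). On input $x\in\Sigma^n$ the initial configuration is $x$; a computation is accepting if at some step all $n$ cells are simultaneously in $A$. $C$ has time complexity $T\colon\mathbb N_+\to\mathbb N_0$ if for every input $x$ of length $n$ every accepting computation reaches $A^n$ for the first time at a step $<T(n)$; then the coin tosses may be viewed as a matrix $R\in\{0,1\}^{T(n)\times n}$ ($R_j(i)$ = coin of cell $i$ in step $j$), and $C(x,R)\in\{0,1\}$ indicates acceptance; probabilities are over uniformly random $R$. For $p\in[0,1)$,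 $C$ is a one-sided $p$-error PACA for $L$ if for all $x$: $x\in L\iff\Pr[C(x,R)=1]\ge 1-p$ and $x\notin L\iff \Pr[C(x,R)=1]=0$; a one-sided error PACA means $p=1/2$. For $p<1/2$, $C$ is a two-sided $p$-error PACA for $L$ if $x\in L\iff\Pr[C(x,R)=1]\ge1-p$ and $x\notin L\iff\Pr[C(x,R)=1]\le p$; a two-sided error PACA means $p=1/3$. In both cases $L(C)=L$. Languages are subsets of $\Sigma^+$ (the empty word is never considered). A PACA is constant-time if its time complexity is bounded by a constant. *)

theory Defs
  imports Complex_Main "HOL-Library.Landau_Symbols"
begin

text \<open>States are natural numbers drawn from a finite carrier set; the boundary
  symbol is represented by None (so Q_$ corresponds to option values).\<close>

record paca =
  states :: "nat set"
  inp    :: "nat set"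
  acc    :: "nat set"
  delta0 :: "nat option \<Rightarrow> nat \<Rightarrow> nat option \<Rightarrow> nat"
  delta1 :: "nat option \<Rightarrow> nat \<Rightarrow> nat option \<Rightarrow> nat"

definition wf_paca :: "paca \<Rightarrow> bool" where
  "wf_paca C \<longleftrightarrow> finite (states C) \<and> inp C \<subseteq> states C \<and> acc C \<subseteq> states C \<and>
     (\<forall>l s r. (l = None \<or> the l \<in> states C) \<longrightarrow> s \<in> states C \<longrightarrow>
        (r = None \<or> the r \<in> states C) \<longrightarrow>
        delta0 C l s r \<in> states C \<and> delta1 C l s r \<in> states C)"

definition step :: "paca \<Rightarrow> (nat \<Rightarrow> bool) \<Rightarrow> nat list \<Rightarrow> nat list" where
  "step C r s = map (\<lambda>i. (if r i then delta1 C else delta0 C)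
       (if i = 0 then None else Some (s ! (i - 1)))
       (s ! i)
       (if i + 1 = length s then None else Some (s ! (i + 1)))) [0..<length s]"

text \<open>Configuration after t steps on input x with coin matrix R (R j i = coin of cell i in step j).\<close>
fun config :: "paca \<Rightarrow> nat list \<Rightarrow> (nat \<Rightarrow> nat \<Rightarrow> bool) \<Rightarrow> nat \<Rightarrow> nat list" where
  "config C x R 0 = x"
| "config C x R (Suc t) = step C (R t) (config C x R t)"

definition accepting_at :: "paca \<Rightarrow> nat list \<Rightarrow> (nat \<Rightarrow> nat \<Rightarrow> bool) \<Rightarrow> nat \<Rightarrow> bool" where
  "accepting_at C x R t \<longleftrightarrow> set (config C x R t) \<subseteq> acc C"

definition inputs :: "paca \<Rightarrow> nat list set" where
  "inputs C = {x. x \<noteq> [] \<and> set x \<subseteq> inp C}"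

definition has_time_complexity :: "paca \<Rightarrow> (nat \<Rightarrow> nat) \<Rightarrow> bool" where
  "has_time_complexity C T \<longleftrightarrow>
     (\<forall>x \<in> inputs C. \<forall>R t. accepting_at C x R t \<longrightarrow>
        (\<exists>t' < T (length x). accepting_at C x R t'))"

definition accepts :: "paca \<Rightarrow> (nat \<Rightarrow> nat) \<Rightarrow> nat list \<Rightarrow> (nat \<Rightarrow> nat \<Rightarrow> bool) \<Rightarrow> bool" where
  "accepts C T x R \<longleftrightarrow> (\<exists>t < T (length x). accepting_at C x R t)"

definition coin_matrices :: "nat \<Rightarrow> nat \<Rightarrow> (nat \<Rightarrow> nat \<Rightarrow> bool) set" where
  "coin_matrices m n = {R. \<forall>j i. \<not> (j < m \<and> i < n) \<longrightarrow> R j i = False}"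

definition acc_prob :: "paca \<Rightarrow> (nat \<Rightarrow> nat) \<Rightarrow> nat list \<Rightarrow> real" where
  "acc_prob C T x =
     real (card {R \<in> coin_matrices (T (length x)) (length x). accepts C T x R})
       / 2 ^ (T (length x) * length x)"

definition one_sided_paca :: "real \<Rightarrow> paca \<Rightarrow> (nat \<Rightarrow> nat) \<Rightarrow> nat list set \<Rightarrow> bool" where
  "one_sided_paca p C T L \<longleftrightarrow> wf_paca C \<and> has_time_complexity C T \<and> L \<subseteq> inputs C \<and>
     (\<forall>x \<in> inputs C. (x \<in> L \<longleftrightarrow> acc_prob C T x \<ge> 1 - p) \<and>
                     (x \<notin> L \<longleftrightarrow> acc_prob C T x = 0))"

definition two_sided_paca :: "real \<Rightarrow> paca \<Rightarrow> (nat \<Rightarrow> nat) \<Rightarrow> nat list set \<Rightarrow> bool" where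
  "two_sided_paca p C T L \<longleftrightarrow> wf_paca C \<and> has_time_complexity C T \<and> L \<subseteq> inputs C \<and>
     (\<forall>x \<in> inputs C. (x \<in> L \<longleftrightarrow> acc_prob C T x \<ge> 1 - p) \<and>
                     (x \<notin> L \<longleftrightarrow> acc_prob C T x \<le> p))"

end

theory Submission imports Defs "HOL-Library.FuncSet" "HOL-Library.Nat_Bijection"
begin


lemma length_step[simp]: "length (step C r s) = length s"
  by (simp add: step_def)

lemma step_nth: "i < length s \<Longrightarrow> step C r s ! i =
   (if r i then delta1 C else delta0 C)
       (if i = 0 then None else Some (s ! (i - 1)))
       (s ! i)
       (if i + 1 = length s then None else Some (s ! (i + 1)))"
  by (simp add: step_def)

lemma length_config[simp]: "length (config C x R t) = length x"
  by (induction t) auto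

lemma config_states:
  assumes "wf_paca C" "set x \<subseteq> states C"
  shows "set (config C x R t) \<subseteq> states C"
proof (induction t)
  case 0 then show ?case using assms by simp
next
  case (Suc t)
  let ?s = "config C x R t"
  show ?case
  proof
    fix y assume "y \<in> set (config C x R (Suc t))"
    then obtain i where i: "i < length ?s" "y = step C (R t) ?s ! i"
      by (auto simp: in_set_conv_nth)
    have h: "\<And>k. k < length ?s \<Longrightarrow> ?s ! k \<in> states C" using Suc by auto
    have l: "(if i = 0 then None else Some (?s ! (i - 1))) = None \<or>
             the (if i = 0 then None else Some (?s ! (i - 1))) \<in> states C"
      using h i(1) by auto
    have r: "(if i + 1 = length ?s then None else Some (?s ! (i + 1))) = None \<or>
             the (if i + 1 = length ?s then None else Some (?s ! (i + 1))) \<in> states C"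
      using h i(1) by auto
    show "y \<in> states C"
      using assms(1) l r h[OF i(1)] i unfolding wf_paca_def step_nth[OF i(1)]
      by (auto simp del: length_config)
  qed
qed

lemma locality:
  assumes "length y = length x"
  shows "i < length x \<Longrightarrow> (\<forall>k<length x. k \<le> i + t \<and> i \<le> k + t \<longrightarrow> x!k = y!k) \<Longrightarrow>
    config C x R t ! i = config C y R t ! i"
proof (induction t arbitrary: i)
  case 0 then show ?case by simp
next
  case (Suc t)
  have a: "config C x R t ! i = config C y R t ! i"
    using Suc.prems by (intro Suc.IH) auto
  have b: "i \<noteq> 0 \<Longrightarrow> config C x R t ! (i-1) = config C y R t ! (i-1)"
    using Suc.prems by (intro Suc.IH) auto
  have c: "i + 1 < length x \<Longrightarrow> config C x R t ! (i+1) = config C y R t ! (i+1)"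
    using Suc.prems by (intro Suc.IH) auto
  show ?case
    using Suc.prems(1) assms a b c
    by (simp add: step_nth)
qed

definition flip :: "nat \<Rightarrow> nat \<Rightarrow> (nat \<Rightarrow> nat \<Rightarrow> bool) \<Rightarrow> (nat \<Rightarrow> nat \<Rightarrow> bool)" where
  "flip j i R = R(j := (R j)(i := \<not> R j i))"

lemma finite_coin: "finite (coin_matrices m n)"
proof -
  have "coin_matrices m n \<subseteq> (\<lambda>f j i. f (j,i)) ` {f. \<forall>p. p \<notin> {..<m} \<times> {..<n} \<longrightarrow> f p = False}"
  proof
    fix R assume "R \<in> coin_matrices m n"
    then show "R \<in> (\<lambda>f j i. f (j,i)) ` {f. \<forall>p. p \<notin> {..<m} \<times> {..<n} \<longrightarrow> f p = False}"
      by (intro image_eqI[where x="\<lambda>(j,i). R j i"]) (auto simp: coin_matrices_def)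
  qed
  moreover have "finite {f::nat\<times>nat\<Rightarrow>bool. \<forall>p. p \<notin> {..<m} \<times> {..<n} \<longrightarrow> f p = False}"
    using finite_set_of_finite_funs[of "{..<m} \<times> {..<n}" "UNIV::bool set" False] by simp
  ultimately show ?thesis using finite_subset by blast
qed

lemma card_coin: "card (coin_matrices m n) = 2 ^ (m * n)"
proof -
  let ?D = "{..<m} \<times> {..<n}"
  have "bij_betw (\<lambda>R. restrict (\<lambda>(j,i). R j i) ?D) (coin_matrices m n) (PiE ?D (\<lambda>_. UNIV::bool set))"
  proof (rule bij_betwI[where g="\<lambda>f j i. if (j,i) \<in> ?D then f (j,i) else False"])
    show "(\<lambda>R. restrict (\<lambda>(j,i). R j i) ?D) \<in> coin_matrices m n \<rightarrow> PiE ?D (\<lambda>_. UNIV)"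
      by auto
    show "(\<lambda>f j i. if (j,i) \<in> ?D then f (j,i) else False) \<in> PiE ?D (\<lambda>_. UNIV) \<rightarrow> coin_matrices m n"
      by (auto simp: coin_matrices_def)
    fix R assume "R \<in> coin_matrices m n"
    then show "(\<lambda>j i. if (j,i) \<in> ?D then restrict (\<lambda>(j,i). R j i) ?D (j,i) else False) = R"
      by (auto simp: coin_matrices_def fun_eq_iff)
  next
    fix f assume f: "f \<in> PiE ?D (\<lambda>_. UNIV::bool set)"
    show "restrict (\<lambda>(j,i). if (j,i) \<in> ?D then f (j,i) else False) ?D = f"
    proof
      fix p show "restrict (\<lambda>(j,i). if (j,i) \<in> ?D then f (j,i) else False) ?D p = f p"
        using f by (cases p) (auto simp: PiE_def extensional_def)
    qed
  qed
  then have "card (coin_matrices m n) = card (PiE ?D (\<lambda>_. UNIV::bool set))"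
    by (rule bij_betw_same_card)
  also have "\<dots> = 2 ^ (m * n)" by (simp add: card_PiE card_cartesian_product)
  finally show ?thesis .
qed

lemma halving:
  assumes "finite M" "\<And>R. R \<in> M \<Longrightarrow> f R \<in> M" "\<And>R. R \<in> M \<Longrightarrow> f (f R) = R"
    "\<And>R. R \<in> M \<Longrightarrow> P (f R) \<longleftrightarrow> \<not> P R"
  shows "2 * card {R\<in>M. P R} = card M"
proof -
  have "bij_betw f {R\<in>M. P R} {R\<in>M. \<not> P R}"
    by (rule bij_betwI[where g=f]) (use assms in auto)
  then have e: "card {R\<in>M. P R} = card {R\<in>M. \<not> P R}" by (rule bij_betw_same_card)
  have "card M = card {R\<in>M. P R} + card {R\<in>M. \<not> P R}"
    using assms(1) by (subst card_Un_disjoint[symmetric]) (auto intro: arg_cong[where f=card])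
  then show ?thesis using e by simp
qed



lemma flip_apply: "flip j i R j' i' = (if j' = j \<and> i' = i then \<not> R j i else R j' i')"
  by (simp add: flip_def)

lemma flip_flip: "flip j i (flip j i R) = R"
  by (simp add: flip_def fun_eq_iff)

lemma flip_coin: "j < m \<Longrightarrow> i < n \<Longrightarrow> R \<in> coin_matrices m n \<Longrightarrow> flip j i R \<in> coin_matrices m n"
  by (auto simp: coin_matrices_def flip_apply)

definition f2 :: "bool \<Rightarrow> nat \<Rightarrow> nat" where
  "f2 c s = (if s = 0 then 0 else if s = 1 then (if c then 3 else 2)
     else if s = 2 then (if c then 5 else 4) else if s = 3 then (if c then 7 else 6)
     else if s = 4 then 8 else if s \<in> {5,6,7} then s - 1 else 9)"

definition C2 :: paca where
  "C2 = \<lparr>states = {0..9}, inp = {0,1}, acc = {0,8},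
         delta0 = (\<lambda>l s r. f2 False s), delta1 = (\<lambda>l s r. f2 True s)\<rparr>"

fun cs :: "nat \<Rightarrow> (nat \<Rightarrow> bool) \<Rightarrow> nat \<Rightarrow> nat" where
  "cs s r 0 = s"
| "cs s r (Suc t) = f2 (r t) (cs s r t)"

lemma cfg2: "i < length x \<Longrightarrow> config C2 x R t ! i = cs (x!i) (\<lambda>j. R j i) t"
  by (induction t) (auto simp: step_nth C2_def)

lemma cs0: "cs 0 r t = 0"
  by (induction t) (auto simp: f2_def)

definition sl :: "(nat \<Rightarrow> bool) \<Rightarrow> nat" where
  "sl r = (if r 0 then 2 else 0) + (if r 1 then 1 else 0)"

lemma cs9: "cs 1 r (t + 7) = 9"
proof (induction t)
  case 0 then show ?case
    by (cases "r 0"; cases "r 1") (simp_all add: f2_def numeral_eq_Suc)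
next
  case (Suc t)
  have "Suc t + 7 = Suc (t + 7)" by simp
  then show ?case using Suc by (simp only: cs.simps) (simp add: f2_def)
qed

lemma cs1: "cs 1 r t \<in> {0,8} \<longleftrightarrow> t = 3 + sl r"
proof (cases "t < 7")
  case True
  then have "t = 0 \<or> t = 1 \<or> t = 2 \<or> t = 3 \<or> t = 4 \<or> t = 5 \<or> t = 6" by auto
  then show ?thesis
    by (cases "r 0"; cases "r 1") (auto simp: f2_def sl_def numeral_eq_Suc)
next
  case False
  then obtain u where "t = u + 7" by (metis add.commute le_Suc_ex not_less)
  then show ?thesis using cs9[of r u] by (auto simp: sl_def)
qed

definition L2 :: "nat list set" where
  "L2 = {x. x \<noteq> [] \<and> set x \<subseteq> {0,1} \<and>
     (\<forall>k l. k < length x \<longrightarrow> l < length x \<longrightarrow> x!k = 1 \<longrightarrow> x!l = 1 \<longrightarrow> k = l)}"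

lemma inputs_C2: "inputs C2 = {x. x \<noteq> [] \<and> set x \<subseteq> {0,1}}"
  by (simp add: inputs_def C2_def)

lemma acc_C2:
  assumes "set x \<subseteq> {0,1}"
  shows "accepting_at C2 x R t \<longleftrightarrow> (\<forall>i<length x. x!i = 1 \<longrightarrow> t = 3 + sl (\<lambda>j. R j i))"
proof -
  have "accepting_at C2 x R t \<longleftrightarrow> (\<forall>i<length x. config C2 x R t ! i \<in> {0,8})"
  proof -
    have a: "acc C2 = {0,8}" by (simp add: C2_def)
    have g: "\<And>xs A. set xs \<subseteq> A \<longleftrightarrow> (\<forall>i<length xs. xs!i \<in> A)"
      by (metis in_set_conv_nth subset_code(1))
    show ?thesis unfolding accepting_at_def a g by simp
  qed
  also have "\<dots> \<longleftrightarrow> (\<forall>i<length x. cs (x!i) (\<lambda>j. R j i) t \<in> {0,8})"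
    by (simp add: cfg2)
  also have "\<dots> \<longleftrightarrow> (\<forall>i<length x. x!i = 1 \<longrightarrow> t = 3 + sl (\<lambda>j. R j i))"
  proof -
    have "\<And>i. i < length x \<Longrightarrow> x!i = 0 \<or> x!i = 1" using assms nth_mem by fastforce
    then have "\<And>i. i < length x \<Longrightarrow> cs (x!i) (\<lambda>j. R j i) t \<in> {0,8} \<longleftrightarrow> (x!i = 1 \<longrightarrow> t = 3 + sl (\<lambda>j. R j i))"
    proof -
      fix i assume "i < length x"
      then have "x!i = 0 \<or> x!i = 1" using \<open>\<And>i. i < length x \<Longrightarrow> x!i = 0 \<or> x!i = 1\<close> by blast
      then show "cs (x!i) (\<lambda>j. R j i) t \<in> {0,8} \<longleftrightarrow> (x!i = 1 \<longrightarrow> t = 3 + sl (\<lambda>j. R j i))"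
      proof
        assume "x!i = 0" then show ?thesis by (simp add: cs0)
      next
        assume h: "x!i = 1" show ?thesis unfolding h using cs1[of "\<lambda>j. R j i" t] by simp
      qed
    qed
    then show ?thesis by blast
  qed
  finally show ?thesis .
qed

lemma sl_lt: "sl r < 4" by (simp add: sl_def)

lemma C2_time: "has_time_complexity C2 (\<lambda>_. 7)"
  unfolding has_time_complexity_def
proof (intro ballI allI impI)
  fix x R t assume x: "x \<in> inputs C2" and a: "accepting_at C2 x R t"
  have s: "set x \<subseteq> {0,1}" using x inputs_C2 by auto
  show "\<exists>t'<7. accepting_at C2 x R t'"
  proof (cases "\<exists>i<length x. x!i = 1")
    case True
    then obtain i where "i < length x" "x!i = 1" by auto
    then have "t = 3 + sl (\<lambda>j. R j i)" using a acc_C2[OF s] by auto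
    then show ?thesis using a sl_lt[of "\<lambda>j. R j i"] by (intro exI[of _ t]) auto
  next
    case False
    then show ?thesis using acc_C2[OF s] by (intro exI[of _ 0]) auto
  qed
qed

lemma wf_C2: "wf_paca C2"
  by (auto simp: wf_paca_def C2_def f2_def)

lemma C2_in:
  assumes "x \<in> L2"
  shows "acc_prob C2 (\<lambda>_. 7) x = 1"
proof -
  have s: "set x \<subseteq> {0,1}" and u: "\<And>k l. k < length x \<Longrightarrow> l < length x \<Longrightarrow> x!k = 1 \<Longrightarrow> x!l = 1 \<Longrightarrow> k = l"
    using assms by (auto simp: L2_def)
  have "\<And>R. accepts C2 (\<lambda>_. 7) x R"
  proof -
    fix R
    show "accepts C2 (\<lambda>_. 7) x R"
    proof (cases "\<exists>i<length x. x!i = 1")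
      case True
      then obtain i where i: "i < length x" "x!i = 1" by auto
      then have "accepting_at C2 x R (3 + sl (\<lambda>j. R j i))"
        using acc_C2[OF s] u by metis
      then show ?thesis using sl_lt[of "\<lambda>j. R j i"] unfolding accepts_def
        by (intro exI[of _ "3 + sl (\<lambda>j. R j i)"]) auto
    next
      case False
      then show ?thesis using acc_C2[OF s] unfolding accepts_def by (intro exI[of _ 0]) auto
    qed
  qed
  then show ?thesis by (simp add: acc_prob_def card_coin)
qed

lemma C2_out:
  assumes "x \<in> inputs C2" "x \<notin> L2"
  shows "acc_prob C2 (\<lambda>_. 7) x \<le> 1/4"
proof -
  have s: "set x \<subseteq> {0,1}" using assms inputs_C2 by auto
  have ne: "x \<noteq> []" using assms(1) inputs_C2 by auto
  have "\<not> (\<forall>k l. k < length x \<longrightarrow> l < length x \<longrightarrow> x!k = 1 \<longrightarrow> x!l = 1 \<longrightarrow> k = l)"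
    using assms(2) s ne unfolding L2_def by blast
  then obtain k l where kl: "k < length x" "l < length x" "x!k = 1" "x!l = 1" "k \<noteq> l"
    by blast
  define M where "M = coin_matrices 7 (length x)"
  define M1 where "M1 = {R\<in>M. R 0 k = R 0 l}"
  define M2 where "M2 = {R\<in>M1. R 1 k = R 1 l}"
  have fM: "finite M" by (simp add: M_def finite_coin)
  have h1: "2 * card M1 = card M" unfolding M1_def
  proof (rule halving[where f="flip 0 l"])
    show "finite M" by (rule fM)
    show "\<And>R. R \<in> M \<Longrightarrow> flip 0 l R \<in> M" unfolding M_def using kl(2) by (intro flip_coin) auto
    show "\<And>R. flip 0 l (flip 0 l R) = R" by (rule flip_flip)
    show "\<And>R. (flip 0 l R 0 k = flip 0 l R 0 l) = (\<not> R 0 k = R 0 l)" using kl(5) by (simp add: flip_apply)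
  qed
  have h2: "2 * card M2 = card M1" unfolding M2_def
  proof (rule halving[where f="flip 1 l"])
    show "finite M1" using fM by (simp add: M1_def)
    show "\<And>R. R \<in> M1 \<Longrightarrow> flip 1 l R \<in> M1" unfolding M1_def M_def using kl(2)
      by (auto intro: flip_coin simp: flip_apply)
    show "\<And>R. flip 1 l (flip 1 l R) = R" by (rule flip_flip)
    show "\<And>R. (flip 1 l R 1 k = flip 1 l R 1 l) = (\<not> R 1 k = R 1 l)" using kl(5) by (simp add: flip_apply)
  qed
  have sub: "{R \<in> M. accepts C2 (\<lambda>_. 7) x R} \<subseteq> M2"
  proof
    fix R assume "R \<in> {R \<in> M. accepts C2 (\<lambda>_. 7) x R}"
    then obtain t where R: "R \<in> M" "accepting_at C2 x R t" by (auto simp: accepts_def)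
    have "t = 3 + sl (\<lambda>j. R j k)" using R(2) acc_C2[OF s] kl(1,3) by blast
    moreover have "t = 3 + sl (\<lambda>j. R j l)" using R(2) acc_C2[OF s] kl(2,4) by blast
    ultimately have "sl (\<lambda>j. R j k) = sl (\<lambda>j. R j l)" by simp
    then have "R 0 k = R 0 l \<and> R 1 k = R 1 l" unfolding sl_def by (auto split: if_splits)
    then show "R \<in> M2" using R by (auto simp: M2_def M1_def)
  qed
  have fM2: "finite M2" using fM by (simp add: M2_def M1_def)
  have "card {R \<in> M. accepts C2 (\<lambda>_. 7) x R} \<le> card M2" by (rule card_mono[OF fM2 sub])
  then have "4 * card {R \<in> M. accepts C2 (\<lambda>_. 7) x R} \<le> card M" using h1 h2 by linarith
  then have "real (4 * card {R \<in> M. accepts C2 (\<lambda>_. 7) x R}) \<le> real (card M)"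
    by (simp only: of_nat_le_iff)
  then have le: "4 * real (card {R \<in> M. accepts C2 (\<lambda>_. 7) x R}) \<le> 2 ^ (7 * length x)"
    by (simp add: M_def card_coin)
  have "acc_prob C2 (\<lambda>_. 7) x = real (card {R \<in> M. accepts C2 (\<lambda>_. 7) x R}) / 2 ^ (7 * length x)"
    by (simp add: acc_prob_def M_def)
  also have "\<dots> \<le> 1/4" using le by (simp add: divide_le_eq)
  finally show ?thesis .
qed

lemma part2_upper: "two_sided_paca (1/3) C2 (\<lambda>_. 7) L2"
  unfolding two_sided_paca_def
proof (intro conjI wf_C2 C2_time ballI)
  show "L2 \<subseteq> inputs C2" by (auto simp: L2_def inputs_C2)
next
  fix x assume x: "x \<in> inputs C2"
  have "x \<in> L2 \<Longrightarrow> acc_prob C2 (\<lambda>_. 7) x = 1" by (rule C2_in)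
  moreover have "x \<notin> L2 \<Longrightarrow> acc_prob C2 (\<lambda>_. 7) x \<le> 1/4" by (rule C2_out[OF x])
  ultimately show "(x \<in> L2) = (1 - 1 / 3 \<le> acc_prob C2 (\<lambda>_. 7) x)"
    and "(x \<notin> L2) = (acc_prob C2 (\<lambda>_. 7) x \<le> 1 / 3)"
    by (cases "x \<in> L2"; simp)+
qed



lemma lower:
  assumes os: "one_sided_paca (1/2) C T L2"
    and sm: "(\<lambda>n. real (T n)) \<in> o(\<lambda>n. sqrt (real n))"
  shows False
proof -
  have "eventually (\<lambda>n. norm (real (T n)) \<le> (1/4) * norm (sqrt (real n))) at_top"
    by (rule landau_o.smallD[OF sm]) simp
  then obtain N0 where N0: "\<And>n. n \<ge> N0 \<Longrightarrow> real (T n) \<le> (1/4) * sqrt (real n)"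
    by (auto simp: eventually_at_top_linorder)
  define n where "n = Suc N0"
  define \<tau> where "\<tau> = T n"
  have n1: "n \<ge> 1" by (simp add: n_def)
  have tau: "real \<tau> \<le> sqrt (real n) / 4" using N0[of n] by (simp add: n_def \<tau>_def)
  have big: "2 * \<tau> * (2 * \<tau> + 1) < n"
  proof -
    define s where "s = sqrt (real n)"
    have s1: "s \<ge> 1" using n1 by (simp add: s_def)
    have ss: "s * s = real n" by (simp add: s_def)
    have t0: "0 \<le> real \<tau>" by simp
    have "real \<tau> * real \<tau> \<le> (s/4) * (s/4)" using tau t0 by (intro mult_mono) (auto simp: s_def)
    moreover have "s \<le> s * s" using s1 by simp
    moreover have "real n \<ge> 1" using n1 by simp
    ultimately have "real (2 * \<tau> * (2 * \<tau> + 1)) < real n"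
      using tau ss by (simp add: s_def algebra_simps)
    then show ?thesis by linarith
  qed
  define m where "m = 2 * \<tau> + 1"
  define p where "p i = i * (2 * \<tau> + 1)" for i
  have pn: "i < m \<Longrightarrow> p i < n" for i
  proof -
    assume "i < m"
    then have "i \<le> 2 * \<tau>" by (simp add: m_def)
    then have "p i \<le> 2 * \<tau> * (2 * \<tau> + 1)" unfolding p_def by (intro mult_right_mono) auto
    then show ?thesis using big by linarith
  qed
  have psep: "i < j \<Longrightarrow> p i + (2 * \<tau> + 1) \<le> p j" for i j
  proof -
    assume "i < j"
    then have "(i + 1) * (2 * \<tau> + 1) \<le> j * (2 * \<tau> + 1)" by (intro mult_right_mono) auto
    then show ?thesis by (simp add: p_def algebra_simps)
  qed
  define w where "w i = map (\<lambda>k. if k = p i then (1::nat) else 0) [0..<n]" for i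
  define w2 where "w2 i j = map (\<lambda>k. if k = p i \<or> k = p j then (1::nat) else 0) [0..<n]" for i j
  have lw[simp]: "length (w i) = n" "length (w2 i j) = n" for i j by (simp_all add: w_def w2_def)
  have wn: "k < n \<Longrightarrow> w i ! k = (if k = p i then 1 else 0)" for i k by (simp add: w_def)
  have w2n: "k < n \<Longrightarrow> w2 i j ! k = (if k = p i \<or> k = p j then 1 else 0)" for i j k by (simp add: w2_def)
  have wf: "wf_paca C" and tc: "has_time_complexity C T" and Lsub: "L2 \<subseteq> inputs C"
    and cond: "\<And>x. x \<in> inputs C \<Longrightarrow> (x \<in> L2 \<longleftrightarrow> acc_prob C T x \<ge> 1 - 1/2) \<and> (x \<notin> L2 \<longleftrightarrow> acc_prob C T x = 0)"
    using os unfolding one_sided_paca_def by auto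
  have "[0] \<in> L2" "[1] \<in> L2" by (auto simp: L2_def)
  then have "[0] \<in> inputs C" "[1] \<in> inputs C" using Lsub by auto
  then have inp01: "{0,1} \<subseteq> inp C" by (auto simp: inputs_def)
  have setw: "set (w i) \<subseteq> {0,1}" "set (w2 i j) \<subseteq> {0,1}" for i j by (auto simp: w_def w2_def)
  have win: "w i \<in> inputs C" "w2 i j \<in> inputs C" for i j
    using setw inp01 n1 by (auto simp: inputs_def w_def w2_def)
  have wL: "i < m \<Longrightarrow> w i \<in> L2" for i
  proof -
    have u: "k < n \<Longrightarrow> w i ! k = 1 \<Longrightarrow> k = p i" for k by (simp add: wn split: if_splits)
    have ne: "w i \<noteq> []" using n1 by (metis length_0_conv lw(1) not_one_le_zero)
    show ?thesis unfolding L2_def using u ne setw(1)[of i] by (simp, metis lw(1))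
  qed
  have w2L: "i < m \<Longrightarrow> j < m \<Longrightarrow> i \<noteq> j \<Longrightarrow> w2 i j \<notin> L2" for i j
  proof
    assume ij: "i < m" "j < m" "i \<noteq> j" and "w2 i j \<in> L2"
    then have u: "\<forall>k l. k < n \<longrightarrow> l < n \<longrightarrow> w2 i j!k = 1 \<longrightarrow> w2 i j!l = 1 \<longrightarrow> k = l"
      unfolding L2_def by simp
    have "w2 i j ! p i = 1" "w2 i j ! p j = 1" using pn ij w2n by auto
    then have "p i = p j" using u pn ij by blast
    then show False using ij psep[of i j] psep[of j i] by (cases "i < j") auto
  qed
  define M where "M = coin_matrices \<tau> n"
  define NN where "NN = card M"
  have fM: "finite M" by (simp add: M_def finite_coin)
  have NN: "NN = 2 ^ (\<tau> * n)" by (simp add: NN_def M_def card_coin)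
  define F where "F i = {R\<in>M. accepts C T (w i) R}" for i
  define E where "E i t = {R\<in>M. accepting_at C (w i) R t}" for i t
  have FE: "F i = (\<Union>t\<in>{..<\<tau>}. E i t)" for i
    by (auto simp: F_def E_def accepts_def \<tau>_def)
  have Fbig: "i < m \<Longrightarrow> NN \<le> 2 * card (F i)" for i
  proof -
    assume "i < m"
    then have "acc_prob C T (w i) \<ge> 1/2" using cond[OF win(1)] wL by auto
    then have "1/2 \<le> real (card (F i)) / 2 ^ (\<tau> * n)"
      by (simp add: acc_prob_def F_def M_def \<tau>_def)
    then have "real NN \<le> 2 * real (card (F i))" unfolding NN by (simp add: field_simps)
    then show ?thesis by linarith
  qed
  have disj: "i < m \<Longrightarrow> j < m \<Longrightarrow> i \<noteq> j \<Longrightarrow> t < \<tau> \<Longrightarrow> E i t \<inter> E j t = {}" for i j t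
  proof (rule ccontr)
    assume ij: "i < m" "j < m" "i \<noteq> j" "t < \<tau>" and "E i t \<inter> E j t \<noteq> {}"
    then obtain R where R: "R \<in> M" "accepting_at C (w i) R t" "accepting_at C (w j) R t"
      by (auto simp: E_def)
    have sep: "p i + (2 * \<tau> + 1) \<le> p j \<or> p j + (2 * \<tau> + 1) \<le> p i"
      using ij psep[of i j] psep[of j i] by (cases "i < j") auto
    have "accepting_at C (w2 i j) R t"
      unfolding accepting_at_def
    proof
      fix y assume "y \<in> set (config C (w2 i j) R t)"
      then obtain k where k: "k < n" "y = config C (w2 i j) R t ! k"
        by (auto simp: in_set_conv_nth)
      show "y \<in> acc C"
      proof (cases "p j \<le> k + t \<and> k \<le> p j + t")
        case False
        have "config C (w2 i j) R t ! k = config C (w i) R t ! k"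
        proof (rule locality)
          show "length (w i) = length (w2 i j)" by simp
          show "k < length (w2 i j)" using k(1) by simp
          show "\<forall>k'<length (w2 i j). k' \<le> k + t \<and> k \<le> k' + t \<longrightarrow> w2 i j ! k' = w i ! k'"
          proof (intro allI impI)
            fix k' assume a: "k' < length (w2 i j)" "k' \<le> k + t \<and> k \<le> k' + t"
            then have "k' \<noteq> p j" using False by auto
            then show "w2 i j ! k' = w i ! k'" using a(1) by (simp add: wn w2n)
          qed
        qed
        moreover have "config C (w i) R t ! k \<in> set (config C (w i) R t)" using k(1) by (intro nth_mem) simp
        ultimately show ?thesis using R(2) k(2) unfolding accepting_at_def by auto
      next
        case True
        then have nf: "\<not> (p i \<le> k + t \<and> k \<le> p i + t)" using sep ij(4) by linarith
        have "config C (w2 i j) R t ! k = config C (w j) R t ! k"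
        proof (rule locality)
          show "length (w j) = length (w2 i j)" by simp
          show "k < length (w2 i j)" using k(1) by simp
          show "\<forall>k'<length (w2 i j). k' \<le> k + t \<and> k \<le> k' + t \<longrightarrow> w2 i j ! k' = w j ! k'"
          proof (intro allI impI)
            fix k' assume a: "k' < length (w2 i j)" "k' \<le> k + t \<and> k \<le> k' + t"
            then have "k' \<noteq> p i" using nf by auto
            then show "w2 i j ! k' = w j ! k'" using a(1) by (simp add: wn w2n)
          qed
        qed
        moreover have "config C (w j) R t ! k \<in> set (config C (w j) R t)" using k(1) by (intro nth_mem) simp
        ultimately show ?thesis using R(3) k(2) unfolding accepting_at_def by auto
      qed
    qed
    then have "R \<in> {R\<in>M. accepts C T (w2 i j) R}"
      using R(1) ij(4) by (auto simp: accepts_def \<tau>_def)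
    moreover have "finite {R\<in>M. accepts C T (w2 i j) R}" using fM by simp
    ultimately have "card {R\<in>M. accepts C T (w2 i j) R} > 0" by (auto simp: card_gt_0_iff)
    then have "acc_prob C T (w2 i j) > 0"
      by (simp add: acc_prob_def M_def \<tau>_def)
    moreover have "acc_prob C T (w2 i j) = 0" using cond[OF win(2)] w2L[OF ij(1-3)] by auto
    ultimately show False by simp
  qed
  have "(\<Sum>i<m. NN) \<le> (\<Sum>i<m. 2 * card (F i))"
    by (rule sum_mono) (simp add: Fbig)
  then have "m * NN \<le> (\<Sum>i<m. 2 * card (F i))" by simp
  also
have "\<dots> = 2 * (\<Sum>i<m. card (F i))" by (simp add: sum_distrib_left)
  also have "(\<Sum>i<m. card (F i)) \<le> (\<Sum>i<m. \<Sum>t<\<tau>. card (E i t))"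
    unfolding FE by (intro sum_mono card_UN_le) simp
  also have "\<dots> = (\<Sum>t<\<tau>. \<Sum>i<m. card (E i t))" by (rule sum.swap)
  also have "\<dots> = (\<Sum>t<\<tau>. card (\<Union>i\<in>{..<m}. E i t))"
  proof (rule sum.cong[OF refl])
    fix t assume "t \<in> {..<\<tau>}"
    then show "(\<Sum>i<m. card (E i t)) = card (\<Union>i\<in>{..<m}. E i t)"
      using disj fM by (subst card_UN_disjoint) (auto simp: E_def)
  qed
  also have "\<dots> \<le> (\<Sum>t<\<tau>. NN)"
    unfolding NN_def by (intro sum_mono card_mono[OF fM]) (auto simp: E_def)
  also have "\<dots> = \<tau> * NN" by simp
  finally have "m * NN \<le> 2 * (\<tau> * NN)" by simp
  moreover have "NN > 0" by (simp add: NN)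
  ultimately show False by (simp add: m_def algebra_simps)
qed



definition KK :: "paca \<Rightarrow> nat" where "KK C = Suc (Max (insert 0 (states C)))"
definition enc :: "paca \<Rightarrow> nat \<Rightarrow> nat \<Rightarrow> nat \<Rightarrow> nat" where
  "enc C a b ph = KK C + 2 * prod_encode (a, b) + ph"
definition dA :: "paca \<Rightarrow> nat \<Rightarrow> nat" where
  "dA C s = (if s \<in> inp C then s else fst (prod_decode ((s - KK C) div 2)))"
definition dB :: "paca \<Rightarrow> nat \<Rightarrow> nat" where
  "dB C s = (if s \<in> inp C then s else snd (prod_decode ((s - KK C) div 2)))"
definition dP :: "paca \<Rightarrow> nat \<Rightarrow> nat" where
  "dP C s = (if s \<in> inp C then 0 else (s - KK C) mod 2)"

definition dl :: "paca \<Rightarrow> bool \<Rightarrow> nat option \<Rightarrow> nat \<Rightarrow> nat option \<Rightarrow> nat" where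
  "dl C c = (if c then delta1 C else delta0 C)"

definition dd :: "paca \<Rightarrow> bool \<Rightarrow> nat option \<Rightarrow> nat \<Rightarrow> nat option \<Rightarrow> nat" where
  "dd C c l s r = (if dP C s = 0
     then enc C (dl C c (map_option (dA C) l) (dA C s) (map_option (dA C) r)) (dB C s) 1
     else enc C (dA C s) (dl C c (map_option (dB C) l) (dB C s) (map_option (dB C) r)) 0)"

definition stC :: "paca \<Rightarrow> nat set" where
  "stC C = inp C \<union> (\<lambda>(a,b,ph). enc C a b ph) ` (states C \<times> states C \<times> {0,1})"

definition C1 :: "paca \<Rightarrow> paca" where
  "C1 C = \<lparr>states = stC C, inp = inp C,
     acc = {s \<in> stC C. (dP C s = 0 \<and> dA C s \<in> acc C) \<or> (dP C s = 1 \<and> dB C s \<in> acc C)},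
     delta0 = dd C False, delta1 = dd C True\<rparr>"

lemma KK_gt: "finite (states C) \<Longrightarrow> s \<in> states C \<Longrightarrow> s < KK C"
  unfolding KK_def by (simp add: le_imp_less_Suc)

lemma enc_notin: "wf_paca C \<Longrightarrow> enc C a b ph \<notin> inp C"
proof
  assume w: "wf_paca C" and e: "enc C a b ph \<in> inp C"
  then have "enc C a b ph \<in> states C" by (auto simp: wf_paca_def)
  then have "enc C a b ph < KK C" using KK_gt w by (auto simp: wf_paca_def)
  then show False by (simp add: enc_def)
qed

lemma dec_enc:
  assumes "wf_paca C" "ph < 2"
  shows "dA C (enc C a b ph) = a" "dB C (enc C a b ph) = b" "dP C (enc C a b ph) = ph"
proof -
  have u: "enc C a b ph - KK C = 2 * prod_encode (a,b) + ph" by (simp add: enc_def)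
  have d: "(2 * prod_encode (a,b) + ph) div 2 = prod_encode (a,b)" using assms(2) by simp
  have m: "(2 * prod_encode (a,b) + ph) mod 2 = ph" using assms(2) by simp
  show "dA C (enc C a b ph) = a" "dB C (enc C a b ph) = b" "dP C (enc C a b ph) = ph"
    using enc_notin[OF assms(1)] u d m by (simp_all add: dA_def dB_def dP_def)
qed

lemma dec_inp: "s \<in> inp C \<Longrightarrow> dA C s = s \<and> dB C s = s \<and> dP C s = 0"
  by (simp add: dA_def dB_def dP_def)

lemma step_C1_nth: "i < length s \<Longrightarrow> step (C1 C) r s ! i =
   dd C (r i) (if i = 0 then None else Some (s ! (i - 1))) (s ! i)
       (if i + 1 = length s then None else Some (s ! (i + 1)))"
  by (simp add: step_nth C1_def)

lemma step_C_nth: "i < length s \<Longrightarrow> step C r s ! i =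
   dl C (r i) (if i = 0 then None else Some (s ! (i - 1))) (s ! i)
       (if i + 1 = length s then None else Some (s ! (i + 1)))"
  by (simp add: step_nth dl_def)

lemma simA:
  assumes w: "wf_paca C" and len: "length a = length s" "length b = length s"
    and h: "\<And>i. i < length s \<Longrightarrow> dA C (s!i) = a!i \<and> dB C (s!i) = b!i \<and> dP C (s!i) = 0"
    and i: "i < length s"
  shows "dA C (step (C1 C) r s ! i) = step C r a ! i \<and> dB C (step (C1 C) r s ! i) = b!i
        \<and> dP C (step (C1 C) r s ! i) = 1"
proof -
  have l: "map_option (dA C) (if i = 0 then None else Some (s ! (i - 1))) =
           (if i = 0 then None else Some (a ! (i - 1)))" using h i by auto
  have rr: "map_option (dA C) (if i + 1 = length s then None else Some (s ! (i + 1))) =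
           (if i + 1 = length a then None else Some (a ! (i + 1)))" using h i len by auto
  have s1: "step (C1 C) r s ! i = dd C (r i) (if i = 0 then None else Some (s ! (i - 1))) (s ! i)
       (if i + 1 = length s then None else Some (s ! (i + 1)))" by (rule step_C1_nth[OF i])
  have s2: "step C r a ! i = dl C (r i) (if i = 0 then None else Some (a ! (i - 1))) (a ! i)
       (if i + 1 = length a then None else Some (a ! (i + 1)))" by (rule step_C_nth) (simp add: len i)
  show ?thesis unfolding s1 s2 using h[OF i] l rr
    by (simp add: dd_def dec_enc[OF w])
qed

lemma simB:
  assumes w: "wf_paca C" and len: "length a = length s" "length b = length s"
    and h: "\<And>i. i < length s \<Longrightarrow> dA C (s!i) = a!i \<and> dB C (s!i) = b!i \<and> dP C (s!i) = 1"
    and i: "i < length s"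
  shows "dA C (step (C1 C) r s ! i) = a ! i \<and> dB C (step (C1 C) r s ! i) = step C r b ! i
        \<and> dP C (step (C1 C) r s ! i) = 0"
proof -
  have l: "map_option (dB C) (if i = 0 then None else Some (s ! (i - 1))) =
           (if i = 0 then None else Some (b ! (i - 1)))" using h i by auto
  have rr: "map_option (dB C) (if i + 1 = length s then None else Some (s ! (i + 1))) =
           (if i + 1 = length b then None else Some (b ! (i + 1)))" using h i len by auto
  have s1: "step (C1 C) r s ! i = dd C (r i) (if i = 0 then None else Some (s ! (i - 1))) (s ! i)
       (if i + 1 = length s then None else Some (s ! (i + 1)))" by (rule step_C1_nth[OF i])
  have s2: "step C r b ! i = dl C (r i) (if i = 0 then None else Some (b ! (i - 1))) (b ! i)
       (if i + 1 = length b then None else Some (b ! (i + 1)))" by (rule step_C_nth) (simp add: len i)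
  show ?thesis unfolding s1 s2 using h[OF i] l rr
    by (simp add: dd_def dec_enc[OF w])
qed

definition ev :: "(nat \<Rightarrow> nat \<Rightarrow> bool) \<Rightarrow> (nat \<Rightarrow> nat \<Rightarrow> bool)" where "ev R j = R (2 * j)"
definition od :: "(nat \<Rightarrow> nat \<Rightarrow> bool) \<Rightarrow> (nat \<Rightarrow> nat \<Rightarrow> bool)" where "od R j = R (2 * j + 1)"

lemma sim:
  assumes w: "wf_paca C" and x: "set x \<subseteq> inp C"
  shows "\<forall>i<length x. dA C (config (C1 C) x R (2*t) ! i) = config C x (ev R) t ! i
          \<and> dB C (config (C1 C) x R (2*t) ! i) = config C x (od R) t ! i
          \<and> dP C (config (C1 C) x R (2*t) ! i) = 0"
proof (induction t)
  case 0
  show ?case using x dec_inp by (simp add: subset_iff)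
next
  case (Suc t)
  let ?s = "config (C1 C) x R (2*t)"
  let ?a = "config C x (ev R) t"
  let ?b = "config C x (od R) t"
  have hA: "\<And>i. i < length ?s \<Longrightarrow> dA C (?s!i) = ?a!i \<and> dB C (?s!i) = ?b!i \<and> dP C (?s!i) = 0"
    using Suc by simp
  let ?s1 = "step (C1 C) (R (2*t)) ?s"
  let ?a1 = "step C (R (2*t)) ?a"
  have hB: "\<And>i. i < length ?s1 \<Longrightarrow> dA C (?s1!i) = ?a1!i \<and> dB C (?s1!i) = ?b!i \<and> dP C (?s1!i) = 1"
    using simA[OF w _ _ hA] by simp
  let ?s2 = "step (C1 C) (R (2*t+1)) ?s1"
  let ?b1 = "step C (R (2*t+1)) ?b"
  have hC: "\<And>i. i < length ?s2 \<Longrightarrow> dA C (?s2!i) = ?a1!i \<and> dB C (?s2!i) = ?b1!i \<and> dP C (?s2!i) = 0"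
    using simB[OF w _ _ hB] by simp
  have e1: "config (C1 C) x R (2 * Suc t) = ?s2" by simp
  have e2: "config C x (ev R) (Suc t) = ?a1" by (simp add: ev_def)
  have e3: "config C x (od R) (Suc t) = ?b1" by (simp add: od_def)
  show ?case unfolding e1 e2 e3 using hC by simp
qed

lemma sim_odd:
  assumes w: "wf_paca C" and x: "set x \<subseteq> inp C"
  shows "\<forall>i<length x. dA C (config (C1 C) x R (2*t+1) ! i) = config C x (ev R) (Suc t) ! i
          \<and> dB C (config (C1 C) x R (2*t+1) ! i) = config C x (od R) t ! i
          \<and> dP C (config (C1 C) x R (2*t+1) ! i) = 1"
proof -
  let ?s = "config (C1 C) x R (2*t)"
  let ?a = "config C x (ev R) t"
  let ?b = "config C x (od R) t"
  have hA: "\<And>i. i < length ?s \<Longrightarrow> dA C (?s!i) = ?a!i \<and> dB C (?s!i) = ?b!i \<and> dP C (?s!i) = 0"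
    using sim[OF w x] by simp
  let ?s1 = "step (C1 C) (R (2*t)) ?s"
  let ?a1 = "step C (R (2*t)) ?a"
  have hB: "\<And>i. i < length ?s1 \<Longrightarrow> dA C (?s1!i) = ?a1!i \<and> dB C (?s1!i) = ?b!i \<and> dP C (?s1!i) = 1"
    using simA[OF w _ _ hA] by simp
  have e1: "config (C1 C) x R (2 * t + 1) = ?s1" by simp
  have e2: "config C x (ev R) (Suc t) = ?a1" by (simp add: ev_def)
  show ?thesis unfolding e1 e2 using hB by simp
qed


lemma mem_stC: "wf_paca C \<Longrightarrow> s \<in> stC C \<Longrightarrow> dA C s \<in> states C \<and> dB C s \<in> states C \<and> dP C s < 2"
proof -
  assume w: "wf_paca C" and s: "s \<in> stC C"
  show ?thesis
  proof (cases "s \<in> inp C")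
    case True then show ?thesis using w dec_inp[OF True] by (auto simp: wf_paca_def)
  next
    case False
    then obtain a b ph where "s = enc C a b ph" "a \<in> states C" "b \<in> states C" "ph \<in> {0,1}"
      using s unfolding stC_def by auto
    then show ?thesis using dec_enc[OF w] by auto
  qed
qed

lemma enc_stC: "a \<in> states C \<Longrightarrow> b \<in> states C \<Longrightarrow> ph \<in> {0,1} \<Longrightarrow> enc C a b ph \<in> stC C"
  unfolding stC_def by (rule UnI2, rule image_eqI[where x="(a,b,ph)"]) auto

lemma wf_C1: assumes w: "wf_paca C" shows "wf_paca (C1 C)"
proof -
  have fs: "finite (states C)" and iss: "inp C \<subseteq> states C" using w by (auto simp: wf_paca_def)
  have f: "finite (stC C)" unfolding stC_def using fs iss by (auto intro: finite_subset)
  have mo: "\<And>l f. (l = None \<or> the l \<in> stC C) \<Longrightarrow> (\<And>s. s \<in> stC C \<Longrightarrow> f s \<in> states C) \<Longrightarrow>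
      map_option f l = None \<or> the (map_option f l) \<in> states C"
    by (case_tac l) auto
  have cl: "\<And>c l s r. (l = None \<or> the l \<in> stC C) \<Longrightarrow> s \<in> stC C \<Longrightarrow> (r = None \<or> the r \<in> stC C) \<Longrightarrow>
     dd C c l s r \<in> stC C"
  proof -
    fix c l s r assume l: "l = None \<or> the l \<in> stC C" and s: "s \<in> stC C" and r: "r = None \<or> the r \<in> stC C"
    have la: "map_option (dA C) l = None \<or> the (map_option (dA C) l) \<in> states C"
      by (rule mo[OF l]) (use mem_stC[OF w] in auto)
    have ra: "map_option (dA C) r = None \<or> the (map_option (dA C) r) \<in> states C"
      by (rule mo[OF r]) (use mem_stC[OF w] in auto)
    have lb: "map_option (dB C) l = None \<or> the (map_option (dB C) l) \<in> states C"
      by (rule mo[OF l]) (use mem_stC[OF w] in auto)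
    have rb: "map_option (dB C) r = None \<or> the (map_option (dB C) r) \<in> states C"
      by (rule mo[OF r]) (use mem_stC[OF w] in auto)
    have d: "\<And>l' s' r'. (l' = None \<or> the l' \<in> states C) \<Longrightarrow> s' \<in> states C \<Longrightarrow> (r' = None \<or> the r' \<in> states C)
       \<Longrightarrow> dl C c l' s' r' \<in> states C"
      using w unfolding wf_paca_def dl_def by auto
    show "dd C c l s r \<in> stC C"
      unfolding dd_def using mem_stC[OF w s] d[OF la _ ra] d[OF lb _ rb]
      by (auto intro!: enc_stC)
  qed
  show ?thesis unfolding wf_paca_def C1_def using f cl by (auto simp: stC_def)
qed

lemma set_nth_iff: "set xs \<subseteq> A \<longleftrightarrow> (\<forall>i<length xs. xs!i \<in> A)"
  by (metis in_set_conv_nth subset_code(1))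

lemma inputs_C1[simp]: "inputs (C1 C) = inputs C"
  by (simp add: inputs_def C1_def)

lemma acc_C1_iff:
  assumes w: "wf_paca C" and s: "s \<in> stC C"
  shows "s \<in> acc (C1 C) \<longleftrightarrow> (dP C s = 0 \<and> dA C s \<in> acc C) \<or> (dP C s = 1 \<and> dB C s \<in> acc C)"
  using s by (simp add: C1_def)

lemma cfg_stC:
  assumes w: "wf_paca C" and x: "set x \<subseteq> inp C" and i: "i < length x"
  shows "config (C1 C) x R t ! i \<in> stC C"
proof -
  have "set x \<subseteq> states (C1 C)" using x by (auto simp: C1_def stC_def)
  then have "set (config (C1 C) x R t) \<subseteq> states (C1 C)" by (rule config_states[OF wf_C1[OF w]])
  then show ?thesis using i by (auto simp: C1_def set_nth_iff)
qed

lemma acc_even: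
  assumes w: "wf_paca C" and x: "set x \<subseteq> inp C"
  shows "accepting_at (C1 C) x R (2*t) \<longleftrightarrow> accepting_at C x (ev R) t"
proof -
  have "\<forall>i<length x. (config (C1 C) x R (2*t) ! i \<in> acc (C1 C)) = (config C x (ev R) t ! i \<in> acc C)"
  proof (intro allI impI)
    fix i assume i: "i < length x"
    from sim[OF w x, of R t] i have h: "dA C (config (C1 C) x R (2*t) ! i) = config C x (ev R) t ! i
          \<and> dB C (config (C1 C) x R (2*t) ! i) = config C x (od R) t ! i
          \<and> dP C (config (C1 C) x R (2*t) ! i) = 0" by blast
    then have h1: "dA C (config (C1 C) x R (2*t) ! i) = config C x (ev R) t ! i"
      and h2: "dB C (config (C1 C) x R (2*t) ! i) = config C x (od R) t ! i"
      and h3: "dP C (config (C1 C) x R (2*t) ! i) = 0" by blast+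
    show "(config (C1 C) x R (2*t) ! i \<in> acc (C1 C)) = (config C x (ev R) t ! i \<in> acc C)"
      unfolding acc_C1_iff[OF w cfg_stC[OF w x i]] h1 h2 h3 by simp
  qed
  then show ?thesis unfolding accepting_at_def set_nth_iff length_config by blast
qed

lemma acc_odd:
  assumes w: "wf_paca C" and x: "set x \<subseteq> inp C"
  shows "accepting_at (C1 C) x R (2*t+1) \<longleftrightarrow> accepting_at C x (od R) t"
proof -
  have "\<forall>i<length x. (config (C1 C) x R (2*t+1) ! i \<in> acc (C1 C)) = (config C x (od R) t ! i \<in> acc C)"
  proof (intro allI impI)
    fix i assume i: "i < length x"
    from sim_odd[OF w x, of R t] i have h: "dA C (config (C1 C) x R (2*t+1) ! i) = config C x (ev R) (Suc t) ! i
          \<and> dB C (config (C1 C) x R (2*t+1) ! i) = config C x (od R) t ! i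
          \<and> dP C (config (C1 C) x R (2*t+1) ! i) = 1" by blast
    then have h1: "dA C (config (C1 C) x R (2*t+1) ! i) = config C x (ev R) (Suc t) ! i"
      and h2: "dB C (config (C1 C) x R (2*t+1) ! i) = config C x (od R) t ! i"
      and h3: "dP C (config (C1 C) x R (2*t+1) ! i) = 1" by blast+
    show "(config (C1 C) x R (2*t+1) ! i \<in> acc (C1 C)) = (config C x (od R) t ! i \<in> acc C)"
      unfolding acc_C1_iff[OF w cfg_stC[OF w x i]] h1 h2 h3 by simp
  qed
  then show ?thesis unfolding accepting_at_def set_nth_iff length_config by blast
qed

lemma nat_even_odd: "(\<exists>u. t = 2*u) \<or> (\<exists>u. t = 2*u+1)" for t :: nat
  by presburger

lemma acc_any:
  assumes w: "wf_paca C" and x: "set x \<subseteq> inp C"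
  shows "(\<exists>t<2*m. accepting_at (C1 C) x R t) \<longleftrightarrow>
     (\<exists>t<m. accepting_at C x (ev R) t) \<or> (\<exists>t<m. accepting_at C x (od R) t)"
proof
  assume "\<exists>t<2*m. accepting_at (C1 C) x R t"
  then obtain t where t: "t < 2*m" "accepting_at (C1 C) x R t" by auto
  from nat_even_odd[of t] show "(\<exists>t<m. accepting_at C x (ev R) t) \<or> (\<exists>t<m. accepting_at C x (od R) t)"
  proof
    assume "\<exists>u. t = 2*u" then obtain u where "t = 2*u" by auto
    then show ?thesis using t acc_even[OF w x] by auto
  next
    assume "\<exists>u. t = 2*u+1" then obtain u where "t = 2*u+1" by auto
    then show ?thesis using t acc_odd[OF w x] by auto
  qed
next
  assume "(\<exists>t<m. accepting_at C x (ev R) t) \<or> (\<exists>t<m. accepting_at C x (od R) t)"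
  then show "\<exists>t<2*m. accepting_at (C1 C) x R t"
  proof
    assume "\<exists>t<m. accepting_at C x (ev R) t"
    then obtain u where "u < m" "accepting_at C x (ev R) u" by auto
    then show ?thesis using acc_even[OF w x] by (intro exI[of _ "2*u"]) auto
  next
    assume "\<exists>t<m. accepting_at C x (od R) t"
    then obtain u where "u < m" "accepting_at C x (od R) u" by auto
    then show ?thesis using acc_odd[OF w x] by (intro exI[of _ "2*u+1"]) auto
  qed
qed

lemma inputs_set: "x \<in> inputs C \<Longrightarrow> set x \<subseteq> inp C" by (simp add: inputs_def)

lemma time_C1:
  assumes w: "wf_paca C" and tc: "has_time_complexity C T"
  shows "has_time_complexity (C1 C) (\<lambda>n. 2 * T n)"
  unfolding has_time_complexity_def
proof (intro ballI allI impI)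
  fix x R t assume x: "x \<in> inputs (C1 C)" and a: "accepting_at (C1 C) x R t"
  have xs: "set x \<subseteq> inp C" using x by (simp add: inputs_def C1_def)
  have x': "x \<in> inputs C" using x by simp
  from nat_even_odd[of t] have "(\<exists>t<T (length x). accepting_at C x (ev R) t) \<or> (\<exists>t<T (length x). accepting_at C x (od R) t)"
  proof
    assume "\<exists>u. t = 2*u" then obtain u where "t = 2*u" by auto
    then have "accepting_at C x (ev R) u" using a acc_even[OF w xs] by simp
    then show ?thesis using tc x' unfolding has_time_complexity_def by blast
  next
    assume "\<exists>u. t = 2*u+1" then obtain u where "t = 2*u+1" by auto
    then have "accepting_at C x (od R) u" using a acc_odd[OF w xs] by simp
    then show ?thesis using tc x' unfolding has_time_complexity_def by blast
  qed
  then show "\<exists>t'<2 * T (length x). accepting_at (C1 C) x R t'" using acc_any[OF w xs] by blast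
qed

lemma accepts_C1:
  assumes w: "wf_paca C" and x: "set x \<subseteq> inp C"
  shows "accepts (C1 C) (\<lambda>n. 2 * T n) x R \<longleftrightarrow> accepts C T x (ev R) \<or> accepts C T x (od R)"
  unfolding accepts_def using acc_any[OF w x] by simp

definition mg :: "(nat \<Rightarrow> nat \<Rightarrow> bool) \<times> (nat \<Rightarrow> nat \<Rightarrow> bool) \<Rightarrow> (nat \<Rightarrow> nat \<Rightarrow> bool)" where
  "mg q j = (if even j then fst q (j div 2) else snd q (j div 2))"

lemma bij_pair:
  "bij_betw (\<lambda>R. (ev R, od R)) {R\<in>coin_matrices (2*m) n. Q (ev R) (od R)}
      {q\<in>coin_matrices m n \<times> coin_matrices m n. Q (fst q) (snd q)}"
proof (rule bij_betwI[where g=mg])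
  show "(\<lambda>R. (ev R, od R)) \<in> {R\<in>coin_matrices (2*m) n. Q (ev R) (od R)} \<rightarrow>
      {q\<in>coin_matrices m n \<times> coin_matrices m n. Q (fst q) (snd q)}"
    by (auto simp: coin_matrices_def ev_def od_def)
  show "mg \<in> {q\<in>coin_matrices m n \<times> coin_matrices m n. Q (fst q) (snd q)} \<rightarrow>
      {R\<in>coin_matrices (2*m) n. Q (ev R) (od R)}"
  proof
    fix q assume q: "q \<in> {q\<in>coin_matrices m n \<times> coin_matrices m n. Q (fst q) (snd q)}"
    have e1: "ev (mg q) = fst q" by (simp add: ev_def mg_def fun_eq_iff)
    have e2: "od (mg q) = snd q" by (simp add: od_def mg_def fun_eq_iff)
    have "mg q \<in> coin_matrices (2*m) n"
    proof -
      have dv: "\<And>j. \<not> j < 2*m \<Longrightarrow> \<not> j div 2 < m" by linarith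
      show ?thesis using q dv unfolding coin_matrices_def mg_def by auto
    qed
    then show "mg q \<in> {R\<in>coin_matrices (2*m) n. Q (ev R) (od R)}" using q e1 e2 by simp
  qed
  show "\<And>R. R \<in> {R\<in>coin_matrices (2*m) n. Q (ev R) (od R)} \<Longrightarrow> mg (ev R, od R) = R"
    by (auto simp: mg_def ev_def od_def fun_eq_iff)
  show "\<And>q. q \<in> {q\<in>coin_matrices m n \<times> coin_matrices m n. Q (fst q) (snd q)} \<Longrightarrow> (ev (mg q), od (mg q)) = q"
    by (auto simp: mg_def ev_def od_def fun_eq_iff)
qed



lemma ev_coin: "R \<in> coin_matrices (2*m) n \<Longrightarrow> ev R \<in> coin_matrices m n \<and> od R \<in> coin_matrices m n"
  by (auto simp: coin_matrices_def ev_def od_def)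

lemma prob_C1_pos:
  assumes w: "wf_paca C" and x: "x \<in> inputs C" and p: "acc_prob C T x \<ge> 1/2"
  shows "acc_prob (C1 C) (\<lambda>n. 2 * T n) x \<ge> 3/4"
proof -
  define n where "n = length x"
  define m where "m = T n"
  define M where "M = coin_matrices m n"
  define P where "P A = accepts C T x A" for A
  define N where "N = {A\<in>M. \<not> P A}"
  have xs: "set x \<subseteq> inp C" using x by (simp add: inputs_def)
  have fM: "finite M" by (simp add: M_def finite_coin)
  have cM: "card M = 2 ^ (m * n)" by (simp add: M_def card_coin)
  have S: "{R \<in> coin_matrices (2*m) n. accepts (C1 C) (\<lambda>n. 2 * T n) x R}
       = {R \<in> coin_matrices (2*m) n. (\<lambda>a b. P a \<or> P b) (ev R) (od R)}"
    using accepts_C1[OF w xs] by (auto simp: P_def)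
  have "card {R \<in> coin_matrices (2*m) n. (\<lambda>a b. P a \<or> P b) (ev R) (od R)}
      = card {q\<in>M \<times> M. (\<lambda>a b. P a \<or> P b) (fst q) (snd q)}"
    unfolding M_def by (rule bij_betw_same_card[OF bij_pair])
  also have "{q\<in>M \<times> M. (\<lambda>a b. P a \<or> P b) (fst q) (snd q)} = M \<times> M - N \<times> N"
    by (auto simp: N_def)
  also have "card (M \<times> M - N \<times> N) = card M * card M - card N * card N"
    using fM by (subst card_Diff_subset) (auto simp: N_def card_cartesian_product)
  finally have c1: "card {R \<in> coin_matrices (2*m) n. accepts (C1 C) (\<lambda>n. 2 * T n) x R} = card M * card M - card N * card N"
    using S by simp
  have NM: "card N \<le> card M" unfolding N_def using fM by (intro card_mono) auto
  have split: "card M = card {A\<in>M. P A} + card N"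
    using fM unfolding N_def by (subst card_Un_disjoint[symmetric]) (auto intro: arg_cong[where f=card])
  have "1/2 \<le> real (card {A\<in>M. P A}) / 2 ^ (m * n)"
    using p by (simp add: acc_prob_def M_def P_def m_def n_def)
  then have "real (card M) \<le> 2 * real (card {A\<in>M. P A})" using cM by (simp add: field_simps)
  then have N2: "2 * real (card N) \<le> real (card M)" using split by simp
  have Mpos: "real (card M) > 0" using cM by simp
  have "(2 * real (card N)) * (2 * real (card N)) \<le> real (card M) * real (card M)"
    using N2 by (intro mult_mono) auto
  then have key: "4 * (real (card N) * real (card N)) \<le> real (card M) * real (card M)" by simp
  have "acc_prob (C1 C) (\<lambda>n. 2 * T n) x = real (card M * card M - card N * card N) / 2 ^ (2 * m * n)"
    using c1 by (simp add: acc_prob_def m_def n_def)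
  also have "\<dots> = (real (card M) * real (card M) - real (card N) * real (card N)) / (real (card M) * real (card M))"
  proof -
    have "card N * card N \<le> card M * card M" using NM by (intro mult_mono) auto
    moreover have "(2::real) ^ (2 * m * n) = real (card M) * real (card M)"
    proof -
      have "2 * m * n = m * n + m * n" by simp
      then have "(2::real) ^ (2 * m * n) = 2 ^ (m * n) * 2 ^ (m * n)" by (simp only: power_add)
      then show ?thesis using cM by simp
    qed
    ultimately show ?thesis by (simp add: of_nat_diff)
  qed
  also have "\<dots> \<ge> 3/4" using key Mpos by (simp add: field_simps)
  finally show ?thesis .
qed

lemma prob_C1_zero:
  assumes w: "wf_paca C" and x: "x \<in> inputs C" and p: "acc_prob C T x = 0"
  shows "acc_prob (C1 C) (\<lambda>n. 2 * T n) x = 0"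
proof -
  have xs: "set x \<subseteq> inp C" using x by (simp add: inputs_def)
  have "card {R \<in> coin_matrices (T (length x)) (length x). accepts C T x R} = 0"
    using p by (simp add: acc_prob_def)
  then have e: "{R \<in> coin_matrices (T (length x)) (length x). accepts C T x R} = {}"
    by (simp add: finite_coin)
  have "{R \<in> coin_matrices (2 * T (length x)) (length x). accepts (C1 C) (\<lambda>n. 2 * T n) x R} = {}"
    using e accepts_C1[OF w xs] ev_coin by blast
  then show ?thesis unfolding acc_prob_def by (metis card.empty div_0 of_nat_0)
qed

lemma part1:
  assumes os: "one_sided_paca (1/2) C T L"
  shows "two_sided_paca (1/3) (C1 C) (\<lambda>n. 2 * T n) L \<and>
     (\<lambda>n. real (2 * T n)) \<in> O(\<lambda>n. real (T n))"
proof
  have w: "wf_paca C" and tc: "has_time_complexity C T" and Ls: "L \<subseteq> inputs C"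
    and cond: "\<And>x. x \<in> inputs C \<Longrightarrow> (x \<in> L \<longleftrightarrow> acc_prob C T x \<ge> 1 - 1/2) \<and> (x \<notin> L \<longleftrightarrow> acc_prob C T x = 0)"
    using os unfolding one_sided_paca_def by auto
  show "two_sided_paca (1/3) (C1 C) (\<lambda>n. 2 * T n) L"
    unfolding two_sided_paca_def
  proof (intro conjI ballI)
    show "wf_paca (C1 C)" by (rule wf_C1[OF w])
    show "has_time_complexity (C1 C) (\<lambda>n. 2 * T n)" by (rule time_C1[OF w tc])
    show "L \<subseteq> inputs (C1 C)" using Ls by simp
  next
    fix x assume "x \<in> inputs (C1 C)"
    then have x: "x \<in> inputs C" by simp
    have a: "x \<in> L \<Longrightarrow> acc_prob (C1 C) (\<lambda>n. 2 * T n) x \<ge> 3/4"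
      using cond[OF x] prob_C1_pos[OF w x] by auto
    have b: "x \<notin> L \<Longrightarrow> acc_prob (C1 C) (\<lambda>n. 2 * T n) x = 0"
      using cond[OF x] prob_C1_zero[OF w x] by auto
    show "(x \<in> L) = (1 - 1 / 3 \<le> acc_prob (C1 C) (\<lambda>n. 2 * T n) x)"
      using a b by (cases "x \<in> L") auto
    show "(x \<notin> L) = (acc_prob (C1 C) (\<lambda>n. 2 * T n) x \<le> 1 / 3)"
      using a b by (cases "x \<in> L") auto
  qed
  show "(\<lambda>n. real (2 * T n)) \<in> O(\<lambda>n. real (T n))"
    by (intro landau_o.bigI[of 2]) auto
qed

theorem theorem1:
  shows "(\<forall>C T L. one_sided_paca (1/2) C T L \<longrightarrow>
            (\<exists>C' T'. two_sided_paca (1/3) C' T' L \<and>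
                (\<lambda>n. real (T' n)) \<in> O(\<lambda>n. real (T n))))
       \<and> (\<exists>L::nat list set.
            (\<exists>C c. two_sided_paca (1/3) C (\<lambda>_. c) L) \<and>
            \<not> (\<exists>C T. one_sided_paca (1/2) C T L \<and>
                   (\<lambda>n. real (T n)) \<in> o(\<lambda>n. sqrt (real n))))"
proof
  show "\<forall>C T L. one_sided_paca (1/2) C T L \<longrightarrow>
            (\<exists>C' T'. two_sided_paca (1/3) C' T' L \<and>
                (\<lambda>n. real (T' n)) \<in> O(\<lambda>n. real (T n)))"
    using part1 by blast
  show "\<exists>L::nat list set.
            (\<exists>C c. two_sided_paca (1/3) C (\<lambda>_. c) L) \<and>
            \<not> (\<exists>C T. one_sided_paca (1/2) C T L \<and>
                   (\<lambda>n. real (T n)) \<in> o(\<lambda>n. sqrt (real n)))"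
    using part2_upper lower by blast
qed

end
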